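(* Let $\mathcal{C}$ be a deflation-exact category and let $\mathcal{A}$ be a non-empty full subcategory satisfying axiom (A3). Let $f\colon X\rightarrowtail Y$ and $g\colon Y\rightarrowtail Z$ be inflations. If $f$ is an $\mathcal{A}^{-1}$-inflation, then $g\circ f$ is an inflation.
   Context: A conflation category is an additive category with a class of kernel-cokernel pairs (closed under isomorphisms) called conflations; first map an inflation, second a deflation. A deflation-exact category is a conflation category satisfying: (R0) $1_0$ is a deflation; (R1) composites of deflations are deflations; (R2) pullbacks of deflations along arbitrary morphisms exist and are deflations. (A3): if $a\colon C\rightarrowtail D$ is an inflation and $b\colon C\twoheadrightarrow A$ a deflation with $A\in\mathcal{A}$, the pushout of $a$ along $b$ exists and yields a deflation $D\twoheadrightarrow P$ and an inflation $A\rightarrowtail P$. An $\mathcal{A}^{-1}$-inflation is an inflation whose cokernel lies in $\mathcal{A}$. *)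

theory Defs
  imports Main
begin

record ('o, 'm) addcat =
  Ob  :: "'o set"
  Ar  :: "'m set"
  Dom :: "'m \<Rightarrow> 'o"
  Cod :: "'m \<Rightarrow> 'o"
  Id  :: "'o \<Rightarrow> 'm"
  Cmp :: "'m \<Rightarrow> 'm \<Rightarrow> 'm"   (* Cmp C g f = g \<circ> f *)
  Add :: "'m \<Rightarrow> 'm \<Rightarrow> 'm"
  Neg :: "'m \<Rightarrow> 'm"
  Zero :: "'o \<Rightarrow> 'o \<Rightarrow> 'm"

definition hom :: "('o, 'm, 'x) addcat_scheme \<Rightarrow> 'o \<Rightarrow> 'o \<Rightarrow> 'm set" where
  "hom C X Y = {f \<in> Ar C. Dom C f = X \<and> Cod C f = Y}"

definition category :: "('o, 'm, 'x) addcat_scheme \<Rightarrow> bool" where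
  "category C \<longleftrightarrow>
     (\<forall>f \<in> Ar C. Dom C f \<in> Ob C \<and> Cod C f \<in> Ob C) \<and>
     (\<forall>X \<in> Ob C. Id C X \<in> hom C X X) \<and>
     (\<forall>X \<in> Ob C. \<forall>Y \<in> Ob C. \<forall>Z \<in> Ob C. \<forall>f \<in> hom C X Y. \<forall>g \<in> hom C Y Z.
        Cmp C g f \<in> hom C X Z) \<and>
     (\<forall>W \<in> Ob C. \<forall>X \<in> Ob C. \<forall>Y \<in> Ob C. \<forall>Z \<in> Ob C.
        \<forall>f \<in> hom C W X. \<forall>g \<in> hom C X Y. \<forall>h \<in> hom C Y Z.
        Cmp C h (Cmp C g f) = Cmp C (Cmp C h g) f) \<and>
     (\<forall>X \<in> Ob C. \<forall>Y \<in> Ob C. \<forall>f \<in> hom C X Y.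
        Cmp C f (Id C X) = f \<and> Cmp C (Id C Y) f = f)"

definition preadditive :: "('o, 'm, 'x) addcat_scheme \<Rightarrow> bool" where
  "preadditive C \<longleftrightarrow> category C \<and>
     (\<forall>X \<in> Ob C. \<forall>Y \<in> Ob C.
        Zero C X Y \<in> hom C X Y \<and>
        (\<forall>f \<in> hom C X Y. \<forall>g \<in> hom C X Y. Add C f g \<in> hom C X Y) \<and>
        (\<forall>f \<in> hom C X Y. Neg C f \<in> hom C X Y) \<and>
        (\<forall>f \<in> hom C X Y. \<forall>g \<in> hom C X Y. \<forall>h \<in> hom C X Y.
           Add C (Add C f g) h = Add C f (Add C g h)) \<and>
        (\<forall>f \<in> hom C X Y. \<forall>g \<in> hom C X Y. Add C f g = Add C g f) \<and>
        (\<forall>f \<in> hom C X Y. Add C f (Zero C X Y) = f) \<and>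
        (\<forall>f \<in> hom C X Y. Add C f (Neg C f) = Zero C X Y)) \<and>
     (\<forall>X \<in> Ob C. \<forall>Y \<in> Ob C. \<forall>Z \<in> Ob C.
        (\<forall>h \<in> hom C Y Z. \<forall>f \<in> hom C X Y. \<forall>g \<in> hom C X Y.
           Cmp C h (Add C f g) = Add C (Cmp C h f) (Cmp C h g)) \<and>
        (\<forall>f \<in> hom C Y Z. \<forall>g \<in> hom C Y Z. \<forall>h \<in> hom C X Y.
           Cmp C (Add C f g) h = Add C (Cmp C f h) (Cmp C g h)))"

definition zero_object :: "('o, 'm, 'x) addcat_scheme \<Rightarrow> 'o \<Rightarrow> bool" where
  "zero_object C Z0 \<longleftrightarrow> Z0 \<in> Ob C \<and>
     (\<forall>X \<in> Ob C. (\<exists>!f. f \<in> hom C Z0 X) \<and> (\<exists>!f. f \<in> hom C X Z0))"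

definition is_biproduct ::
  "('o, 'm, 'x) addcat_scheme \<Rightarrow> 'o \<Rightarrow> 'o \<Rightarrow> 'o \<Rightarrow> 'm \<Rightarrow> 'm \<Rightarrow> 'm \<Rightarrow> 'm \<Rightarrow> bool" where
  "is_biproduct C X Y B i1 i2 p1 p2 \<longleftrightarrow> B \<in> Ob C \<and>
     i1 \<in> hom C X B \<and> i2 \<in> hom C Y B \<and> p1 \<in> hom C B X \<and> p2 \<in> hom C B Y \<and>
     Cmp C p1 i1 = Id C X \<and> Cmp C p2 i2 = Id C Y \<and>
     Cmp C p2 i1 = Zero C X Y \<and> Cmp C p1 i2 = Zero C Y X \<and>
     Add C (Cmp C i1 p1) (Cmp C i2 p2) = Id C B"

definition additive :: "('o, 'm, 'x) addcat_scheme \<Rightarrow> bool" where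
  "additive C \<longleftrightarrow> preadditive C \<and> (\<exists>Z0. zero_object C Z0) \<and>
     (\<forall>X \<in> Ob C. \<forall>Y \<in> Ob C. \<exists>B i1 i2 p1 p2. is_biproduct C X Y B i1 i2 p1 p2)"

definition is_kernel :: "('o, 'm, 'x) addcat_scheme \<Rightarrow> 'm \<Rightarrow> 'm \<Rightarrow> bool" where
  "is_kernel C k p \<longleftrightarrow> k \<in> Ar C \<and> p \<in> Ar C \<and> Cod C k = Dom C p \<and>
     Cmp C p k = Zero C (Dom C k) (Cod C p) \<and>
     (\<forall>T \<in> Ob C. \<forall>t \<in> hom C T (Dom C p). Cmp C p t = Zero C T (Cod C p) \<longrightarrow>
        (\<exists>!u. u \<in> hom C T (Dom C k) \<and> Cmp C k u = t))"

definition is_cokernel :: "('o, 'm, 'x) addcat_scheme \<Rightarrow> 'm \<Rightarrow> 'm \<Rightarrow> bool" where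
  "is_cokernel C c i \<longleftrightarrow> c \<in> Ar C \<and> i \<in> Ar C \<and> Cod C i = Dom C c \<and>
     Cmp C c i = Zero C (Dom C i) (Cod C c) \<and>
     (\<forall>T \<in> Ob C. \<forall>t \<in> hom C (Cod C i) T. Cmp C t i = Zero C (Dom C i) T \<longrightarrow>
        (\<exists>!u. u \<in> hom C (Cod C c) T \<and> Cmp C u c = t))"

definition kernel_cokernel_pair :: "('o, 'm, 'x) addcat_scheme \<Rightarrow> 'm \<Rightarrow> 'm \<Rightarrow> bool" where
  "kernel_cokernel_pair C i p \<longleftrightarrow> is_kernel C i p \<and> is_cokernel C p i"

definition iso :: "('o, 'm, 'x) addcat_scheme \<Rightarrow> 'm \<Rightarrow> bool" where
  "iso C f \<longleftrightarrow> f \<in> Ar C \<and> (\<exists>g \<in> hom C (Cod C f) (Dom C f).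
     Cmp C g f = Id C (Dom C f) \<and> Cmp C f g = Id C (Cod C f))"

definition is_pullback ::
  "('o, 'm, 'x) addcat_scheme \<Rightarrow> 'm \<Rightarrow> 'm \<Rightarrow> 'o \<Rightarrow> 'm \<Rightarrow> 'm \<Rightarrow> bool" where
  "is_pullback C p t P p' t' \<longleftrightarrow> P \<in> Ob C \<and>
     p' \<in> hom C P (Dom C t) \<and> t' \<in> hom C P (Dom C p) \<and> Cod C p = Cod C t \<and>
     Cmp C p t' = Cmp C t p' \<and>
     (\<forall>T \<in> Ob C. \<forall>a \<in> hom C T (Dom C t). \<forall>b \<in> hom C T (Dom C p).
        Cmp C p b = Cmp C t a \<longrightarrow>
        (\<exists>!u. u \<in> hom C T P \<and> Cmp C p' u = a \<and> Cmp C t' u = b))"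

definition is_pushout ::
  "('o, 'm, 'x) addcat_scheme \<Rightarrow> 'm \<Rightarrow> 'm \<Rightarrow> 'o \<Rightarrow> 'm \<Rightarrow> 'm \<Rightarrow> bool" where
  "is_pushout C a b P a' b' \<longleftrightarrow> P \<in> Ob C \<and>
     a' \<in> hom C (Cod C b) P \<and> b' \<in> hom C (Cod C a) P \<and> Dom C a = Dom C b \<and>
     Cmp C b' a = Cmp C a' b \<and>
     (\<forall>T \<in> Ob C. \<forall>x \<in> hom C (Cod C b) T. \<forall>y \<in> hom C (Cod C a) T.
        Cmp C y a = Cmp C x b \<longrightarrow>
        (\<exists>!u. u \<in> hom C P T \<and> Cmp C u a' = x \<and> Cmp C u b' = y))"

definition conflation_category :: "('o, 'm, 'x) addcat_scheme \<Rightarrow> ('m \<times> 'm) set \<Rightarrow> bool" where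
  "conflation_category C E \<longleftrightarrow> additive C \<and>
     (\<forall>(i, p) \<in> E. kernel_cokernel_pair C i p) \<and>
     (\<forall>(i, p) \<in> E. \<forall>i' p' x y z.
        i' \<in> Ar C \<and> p' \<in> Ar C \<and> Cod C i' = Dom C p' \<and> iso C x \<and> iso C y \<and> iso C z \<and>
        x \<in> hom C (Dom C i) (Dom C i') \<and> y \<in> hom C (Cod C i) (Cod C i') \<and>
        z \<in> hom C (Cod C p) (Cod C p') \<and>
        Cmp C i' x = Cmp C y i \<and> Cmp C p' y = Cmp C z p \<longrightarrow> (i', p') \<in> E)"

definition inflation :: "('o, 'm, 'x) addcat_scheme \<Rightarrow> ('m \<times> 'm) set \<Rightarrow> 'm \<Rightarrow> bool" where
  "inflation C E i \<longleftrightarrow> (\<exists>p. (i, p) \<in> E)"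

definition deflation :: "('o, 'm, 'x) addcat_scheme \<Rightarrow> ('m \<times> 'm) set \<Rightarrow> 'm \<Rightarrow> bool" where
  "deflation C E p \<longleftrightarrow> (\<exists>i. (i, p) \<in> E)"

definition deflation_exact :: "('o, 'm, 'x) addcat_scheme \<Rightarrow> ('m \<times> 'm) set \<Rightarrow> bool" where
  "deflation_exact C E \<longleftrightarrow> conflation_category C E \<and>
     \<comment> \<open>R0\<close>
     (\<forall>Z0. zero_object C Z0 \<longrightarrow> deflation C E (Id C Z0)) \<and>
     \<comment> \<open>R1\<close>
     (\<forall>p q. deflation C E p \<and> deflation C E q \<and> Cod C p = Dom C q \<longrightarrow>
        deflation C E (Cmp C q p)) \<and>
     \<comment> \<open>R2\<close>
     (\<forall>p t. deflation C E p \<and> t \<in> Ar C \<and> Cod C t = Cod C p \<longrightarrow>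
        (\<exists>P p' t'. is_pullback C p t P p' t' \<and> deflation C E p'))"

definition axiom_A3 :: "('o, 'm, 'x) addcat_scheme \<Rightarrow> ('m \<times> 'm) set \<Rightarrow> 'o set \<Rightarrow> bool" where
  "axiom_A3 C E A \<longleftrightarrow>
     (\<forall>a b. inflation C E a \<and> deflation C E b \<and> Dom C a = Dom C b \<and> Cod C b \<in> A \<longrightarrow>
        (\<exists>P a' b'. is_pushout C a b P a' b' \<and> deflation C E b' \<and> inflation C E a'))"

definition A_inv_inflation :: "('o, 'm, 'x) addcat_scheme \<Rightarrow> ('m \<times> 'm) set \<Rightarrow> 'o set \<Rightarrow> 'm \<Rightarrow> bool" where
  "A_inv_inflation C E A i \<longleftrightarrow> (\<exists>p. (i, p) \<in> E \<and> Cod C p \<in> A)"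

end

theory Submission
  imports Defs
begin

lemma in_hom: "f \<in> Ar C \<Longrightarrow> f \<in> hom C (Dom C f) (Cod C f)"
  by (simp add: hom_def)

lemma homD: "f \<in> hom C X Y \<Longrightarrow> f \<in> Ar C \<and> Dom C f = X \<and> Cod C f = Y"
  by (simp add: hom_def)

lemma hom_ob: "category C \<Longrightarrow> f \<in> hom C X Y \<Longrightarrow> X \<in> Ob C \<and> Y \<in> Ob C"
  unfolding category_def hom_def by auto

lemma cmp_hom: "category C \<Longrightarrow> f \<in> hom C X Y \<Longrightarrow> g \<in> hom C Y Z \<Longrightarrow> Cmp C g f \<in> hom C X Z"
  using hom_ob[of C f X Y] hom_ob[of C g Y Z] unfolding category_def by blast

lemma cmp_assoc: "category C \<Longrightarrow> f \<in> hom C W X \<Longrightarrow> g \<in> hom C X Y \<Longrightarrow> h \<in> hom C Y Z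
   \<Longrightarrow> Cmp C h (Cmp C g f) = Cmp C (Cmp C h g) f"
  using hom_ob[of C f W X] hom_ob[of C g X Y] hom_ob[of C h Y Z] unfolding category_def by blast

lemma id_hom: "category C \<Longrightarrow> X \<in> Ob C \<Longrightarrow> Id C X \<in> hom C X X"
  unfolding category_def by blast

lemma id_r: "category C \<Longrightarrow> f \<in> hom C X Y \<Longrightarrow> Cmp C f (Id C X) = f"
  using hom_ob[of C f X Y] unfolding category_def by blast

lemma id_l: "category C \<Longrightarrow> f \<in> hom C X Y \<Longrightarrow> Cmp C (Id C Y) f = f"
  using hom_ob[of C f X Y] unfolding category_def by blast

lemma zero_hom: "preadditive C \<Longrightarrow> X \<in> Ob C \<Longrightarrow> Y \<in> Ob C \<Longrightarrow> Zero C X Y \<in> hom C X Y"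
  unfolding preadditive_def by blast

lemma pa_neg: "preadditive C \<Longrightarrow> X \<in> Ob C \<Longrightarrow> Y \<in> Ob C \<Longrightarrow> f \<in> hom C X Y \<Longrightarrow>
   Neg C f \<in> hom C X Y \<and> Add C f (Neg C f) = Zero C X Y"
  unfolding preadditive_def by blast

lemma pa_zero: "preadditive C \<Longrightarrow> X \<in> Ob C \<Longrightarrow> Y \<in> Ob C \<Longrightarrow> f \<in> hom C X Y \<Longrightarrow>
   Add C f (Zero C X Y) = f"
  unfolding preadditive_def by blast

lemma pa_assoc: "preadditive C \<Longrightarrow> X \<in> Ob C \<Longrightarrow> Y \<in> Ob C \<Longrightarrow> f \<in> hom C X Y \<Longrightarrow>
   g \<in> hom C X Y \<Longrightarrow> h \<in> hom C X Y \<Longrightarrow> Add C (Add C f g) h = Add C f (Add C g h)"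
  unfolding preadditive_def by blast

lemma pa_dl: "preadditive C \<Longrightarrow> X \<in> Ob C \<Longrightarrow> Y \<in> Ob C \<Longrightarrow> Z \<in> Ob C \<Longrightarrow> h \<in> hom C Y Z \<Longrightarrow>
   f \<in> hom C X Y \<Longrightarrow> g \<in> hom C X Y \<Longrightarrow> Cmp C h (Add C f g) = Add C (Cmp C h f) (Cmp C h g)"
  unfolding preadditive_def by blast

lemma pa_dr: "preadditive C \<Longrightarrow> X \<in> Ob C \<Longrightarrow> Y \<in> Ob C \<Longrightarrow> Z \<in> Ob C \<Longrightarrow> f \<in> hom C Y Z \<Longrightarrow>
   g \<in> hom C Y Z \<Longrightarrow> h \<in> hom C X Y \<Longrightarrow> Cmp C (Add C f g) h = Add C (Cmp C f h) (Cmp C g h)"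
  unfolding preadditive_def Ball_def by metis

lemma idem_zero:
  assumes pa: "preadditive C" and X: "X \<in> Ob C" and Z: "Z \<in> Ob C" and zh: "z \<in> hom C X Z"
    and zz: "z = Add C z z"
  shows "z = Zero C X Z"
proof -
  have nz: "Neg C z \<in> hom C X Z" and e: "Add C z (Neg C z) = Zero C X Z"
    using pa_neg[OF pa X Z zh] by auto
  have "Zero C X Z = Add C (Add C z z) (Neg C z)" using e zz by simp
  also have "\<dots> = Add C z (Add C z (Neg C z))" using pa_assoc[OF pa X Z zh zh nz] .
  also have "\<dots> = z" using e pa_zero[OF pa X Z zh] by simp
  finally show ?thesis by simp
qed

lemma cmp_zero_r:
  assumes pa: "preadditive C" and X: "X \<in> Ob C" and h: "h \<in> hom C Y Z"
  shows "Cmp C h (Zero C X Y) = Zero C X Z"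
proof -
  have cat: "category C" using pa preadditive_def by blast
  have Y: "Y \<in> Ob C" and Z: "Z \<in> Ob C" using hom_ob[OF cat h] by auto
  have z0: "Zero C X Y \<in> hom C X Y" using zero_hom[OF pa X Y] .
  define z where "z = Cmp C h (Zero C X Y)"
  have zh: "z \<in> hom C X Z" unfolding z_def using cmp_hom[OF cat z0 h] .
  have "Add C (Zero C X Y) (Zero C X Y) = Zero C X Y" using pa_zero[OF pa X Y z0] .
  hence "z = Cmp C h (Add C (Zero C X Y) (Zero C X Y))" unfolding z_def by simp
  also have "\<dots> = Add C z z" unfolding z_def using pa_dl[OF pa X Y Z h z0 z0] .
  finally have zz: "z = Add C z z" .
  show ?thesis using idem_zero[OF pa X Z zh zz] z_def by simp
qed

lemma cmp_zero_l:
  assumes pa: "preadditive C" and Z: "Z \<in> Ob C" and h: "h \<in> hom C X Y"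
  shows "Cmp C (Zero C Y Z) h = Zero C X Z"
proof -
  have cat: "category C" using pa preadditive_def by blast
  have X: "X \<in> Ob C" and Y: "Y \<in> Ob C" using hom_ob[OF cat h] by auto
  have z0: "Zero C Y Z \<in> hom C Y Z" using zero_hom[OF pa Y Z] .
  define z where "z = Cmp C (Zero C Y Z) h"
  have zh: "z \<in> hom C X Z" unfolding z_def using cmp_hom[OF cat h z0] .
  have "Add C (Zero C Y Z) (Zero C Y Z) = Zero C Y Z" using pa_zero[OF pa Y Z z0] .
  hence "z = Cmp C (Add C (Zero C Y Z) (Zero C Y Z)) h" unfolding z_def by simp
  also have "\<dots> = Add C z z" unfolding z_def using pa_dr[OF pa X Y Z z0 z0 h] .
  finally have zz: "z = Add C z z" .
  show ?thesis using idem_zero[OF pa X Z zh zz] z_def by simp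
qed

lemma kernel_univ:
  "is_kernel C k p \<Longrightarrow> T \<in> Ob C \<Longrightarrow> t \<in> hom C T (Dom C p) \<Longrightarrow> Cmp C p t = Zero C T (Cod C p)
   \<Longrightarrow> \<exists>u. u \<in> hom C T (Dom C k) \<and> Cmp C k u = t"
  unfolding is_kernel_def by blast

lemma ex1_eq: "\<exists>!x. P x \<Longrightarrow> P a \<Longrightarrow> P b \<Longrightarrow> a = b" by blast

lemma kernel_ex1:
  assumes "is_kernel C k p"
  shows "T \<in> Ob C \<Longrightarrow> t \<in> hom C T (Dom C p) \<Longrightarrow> Cmp C p t = Zero C T (Cod C p)
   \<Longrightarrow> \<exists>!u. u \<in> hom C T (Dom C k) \<and> Cmp C k u = t"
  using assms[unfolded is_kernel_def, THEN conjunct2, THEN conjunct2, THEN conjunct2, THEN conjunct2]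
  by blast

lemma kernel_mono:
  assumes pa: "preadditive C" and k: "is_kernel C k p"
    and u1: "u1 \<in> hom C T (Dom C k)" and u2: "u2 \<in> hom C T (Dom C k)"
    and eq: "Cmp C k u1 = Cmp C k u2"
  shows "u1 = u2"
proof -
  have cat: "category C" using pa preadditive_def by blast
  have T: "T \<in> Ob C" using hom_ob[OF cat u1] by auto
  have kh: "k \<in> hom C (Dom C k) (Dom C p)" and ph: "p \<in> hom C (Dom C p) (Cod C p)"
    and pk: "Cmp C p k = Zero C (Dom C k) (Cod C p)"
    using k unfolding is_kernel_def hom_def by auto
  have P: "Cod C p \<in> Ob C" using hom_ob[OF cat ph] by auto
  define t where "t = Cmp C k u1"
  have th: "t \<in> hom C T (Dom C p)" unfolding t_def using cmp_hom[OF cat u1 kh] .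
  have "Cmp C p t = Cmp C (Cmp C p k) u1" unfolding t_def using cmp_assoc[OF cat u1 kh ph] .
  also have "\<dots> = Zero C T (Cod C p)" using pk cmp_zero_l[OF pa P u1] by simp
  finally have "Cmp C p t = Zero C T (Cod C p)" .
  hence E1: "\<exists>!u. u \<in> hom C T (Dom C k) \<and> Cmp C k u = t"
    by (rule kernel_ex1[OF k T th])
  show ?thesis by (rule ex1_eq[OF E1]) (use u1 u2 eq t_def in auto)
qed

lemma kernel_basic:
  assumes "is_kernel C k p"
  shows "k \<in> hom C (Dom C k) (Dom C p) \<and> p \<in> hom C (Dom C p) (Cod C p) \<and>
         Cod C k = Dom C p \<and> Cmp C p k = Zero C (Dom C k) (Cod C p)"
proof -
  have "k \<in> Ar C" "p \<in> Ar C" "Cod C k = Dom C p" "Cmp C p k = Zero C (Dom C k) (Cod C p)"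
    using assms unfolding is_kernel_def by blast+
  thus ?thesis unfolding hom_def by simp
qed

lemma pushout_basic:
  assumes "is_pushout C a b P a' b'"
  shows "P \<in> Ob C \<and> a' \<in> hom C (Cod C b) P \<and> b' \<in> hom C (Cod C a) P \<and> Cmp C b' a = Cmp C a' b"
  using assms unfolding is_pushout_def by blast

lemma pushout_ex:
  assumes "is_pushout C a b P a' b'"
    and "T \<in> Ob C" "x \<in> hom C (Cod C b) T" "y \<in> hom C (Cod C a) T" "Cmp C y a = Cmp C x b"
  shows "\<exists>u. u \<in> hom C P T \<and> Cmp C u a' = x \<and> Cmp C u b' = y"
proof -
  have U: "\<forall>T \<in> Ob C. \<forall>x \<in> hom C (Cod C b) T. \<forall>y \<in> hom C (Cod C a) T.
        Cmp C y a = Cmp C x b \<longrightarrow>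
        (\<exists>!u. u \<in> hom C P T \<and> Cmp C u a' = x \<and> Cmp C u b' = y)"
    by (rule assms(1)[unfolded is_pushout_def, THEN conjunct2, THEN conjunct2, THEN conjunct2,
        THEN conjunct2, THEN conjunct2])
  have "\<exists>!u. u \<in> hom C P T \<and> Cmp C u a' = x \<and> Cmp C u b' = y"
    using U[rule_format, OF assms(2,3,4,5)] .
  thus ?thesis by (rule ex1_implies_ex)
qed

theorem mainTheorem12:
  fixes C :: "('o, 'm, 'x) addcat_scheme" and E :: "('m \<times> 'm) set" and A :: "'o set"
  assumes "deflation_exact C E"
    and "A \<subseteq> Ob C" and "A \<noteq> {}"
    and "axiom_A3 C E A"
    and "inflation C E f" and "inflation C E g" and "Cod C f = Dom C g"
    and "A_inv_inflation C E A f"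
  shows "inflation C E (Cmp C g f)"
proof -
  have cc: "conflation_category C E" using assms(1) unfolding deflation_exact_def by (rule conjunct1)
  have ad: "additive C" using cc unfolding conflation_category_def by (rule conjunct1)
  have pa: "preadditive C" using ad unfolding additive_def by (rule conjunct1)
  have cat: "category C" using pa unfolding preadditive_def by (rule conjunct1)
  have E2: "\<forall>(i, p) \<in> E. kernel_cokernel_pair C i p"
    by (rule cc[unfolded conflation_category_def, THEN conjunct2, THEN conjunct1])
  have kcp: "\<And>i p. (i, p) \<in> E \<Longrightarrow> is_kernel C i p"
  proof -
    fix i p assume "(i, p) \<in> E"
    hence "kernel_cokernel_pair C i p" using E2 by auto
    thus "is_kernel C i p" unfolding kernel_cokernel_pair_def by (rule conjunct1)
  qed
  obtain p where fp: "(f, p) \<in> E" and pA: "Cod C p \<in> A"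
    using assms(8) unfolding A_inv_inflation_def by (elim exE conjE)
  obtain q where gq: "(g, q) \<in> E" using assms(6) unfolding inflation_def by (elim exE)
  have kf: "is_kernel C f p" using kcp[OF fp] .
  have kg: "is_kernel C g q" using kcp[OF gq] .
  note kfb = kernel_basic[OF kf] and kgb = kernel_basic[OF kg]
  define X where "X = Dom C f"
  define Y where "Y = Cod C f"
  define Z where "Z = Cod C g"
  define A0 where "A0 = Cod C p"
  define W where "W = Cod C q"
  have fh: "f \<in> hom C X Y" using kfb unfolding X_def Y_def by simp
  have ph: "p \<in> hom C Y A0" using kfb unfolding A0_def Y_def by simp
  have Dg: "Dom C g = Y" using assms(7) Y_def by simp
  have gh: "g \<in> hom C Y Z" using kgb Dg unfolding Z_def by simp
  have qh: "q \<in> hom C Z W" using kgb unfolding Z_def W_def by simp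
  have pf: "Cmp C p f = Zero C X A0" using kfb unfolding X_def A0_def by simp
  have qg: "Cmp C q g = Zero C Y W" using kgb Dg unfolding W_def by simp
  have Xo: "X \<in> Ob C" and Yo: "Y \<in> Ob C" using hom_ob[OF cat fh] by auto
  have Zo: "Z \<in> Ob C" and Wo: "W \<in> Ob C" using hom_ob[OF cat qh] by auto
  have Ao: "A0 \<in> Ob C" using hom_ob[OF cat ph] by auto
  have Df: "Dom C f = X" using X_def by simp
  have dp: "deflation C E p" unfolding deflation_def using fp by (intro exI)
  have dgp: "Dom C g = Dom C p" using kfb Dg Y_def by simp
  have A3: "\<forall>a b. inflation C E a \<and> deflation C E b \<and> Dom C a = Dom C b \<and> Cod C b \<in> A \<longrightarrow>
        (\<exists>P a' b'. is_pushout C a b P a' b' \<and> deflation C E b' \<and> inflation C E a')"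
    using assms(4) unfolding axiom_A3_def .
  have "\<exists>P a' b'. is_pushout C g p P a' b' \<and> deflation C E b' \<and> inflation C E a'"
    using A3[rule_format, OF conjI[OF assms(6) conjI[OF dp conjI[OF dgp pA]]]] .
  then obtain P a' b' where po: "is_pushout C g p P a' b'" and db: "deflation C E b'"
    and ia: "inflation C E a'" by (elim exE conjE)
  note pob = pushout_basic[OF po]
  have ah: "a' \<in> hom C A0 P" and bh: "b' \<in> hom C Z P" and Po: "P \<in> Ob C"
    and sq: "Cmp C b' g = Cmp C a' p"
    using pob unfolding A0_def Z_def by simp_all
  obtain r where ar: "(a', r) \<in> E" using ia unfolding inflation_def by (elim exE)
  have ka: "is_kernel C a' r" using kcp[OF ar] .
  have Da: "Dom C a' = A0" using ah homD by metis
  have gfh: "Cmp C g f \<in> hom C X Z" using cmp_hom[OF cat fh gh] .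
  obtain q' where q'h: "q' \<in> hom C P W" and q'b: "Cmp C q' b' = q"
  proof -
    have e: "Cmp C q g = Cmp C (Zero C A0 W) p" using qg cmp_zero_l[OF pa Wo ph] by simp
    have z: "Zero C A0 W \<in> hom C (Cod C p) W" using zero_hom[OF pa Ao Wo] A0_def by simp
    have qq: "q \<in> hom C (Cod C g) W" using qh Z_def by simp
    show ?thesis using pushout_ex[OF po Wo z qq e] that by blast
  qed
  have bgf: "Cmp C b' (Cmp C g f) = Zero C X P"
  proof -
    have "Cmp C b' (Cmp C g f) = Cmp C (Cmp C b' g) f" using cmp_assoc[OF cat fh gh bh] .
    also have "\<dots> = Cmp C (Cmp C a' p) f" using sq by simp
    also have "\<dots> = Cmp C a' (Cmp C p f)" using cmp_assoc[OF cat fh ph ah] by simp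
    also have "\<dots> = Zero C X P" using pf cmp_zero_r[OF pa Xo ah] by simp
    finally show ?thesis .
  qed
  have gf_mono: "\<And>T u1 u2. u1 \<in> hom C T X \<Longrightarrow> u2 \<in> hom C T X \<Longrightarrow>
      Cmp C (Cmp C g f) u1 = Cmp C (Cmp C g f) u2 \<Longrightarrow> u1 = u2"
  proof -
    fix T u1 u2 assume u1: "u1 \<in> hom C T X" and u2: "u2 \<in> hom C T X"
      and e: "Cmp C (Cmp C g f) u1 = Cmp C (Cmp C g f) u2"
    have "Cmp C g (Cmp C f u1) = Cmp C g (Cmp C f u2)"
      using e cmp_assoc[OF cat u1 fh gh] cmp_assoc[OF cat u2 fh gh] by simp
    moreover have "Cmp C f u1 \<in> hom C T (Dom C g)" using cmp_hom[OF cat u1 fh] Dg by simp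
    moreover have "Cmp C f u2 \<in> hom C T (Dom C g)" using cmp_hom[OF cat u2 fh] Dg by simp
    ultimately have "Cmp C f u1 = Cmp C f u2"
      using kernel_mono[OF pa kg] by metis
    moreover have "u1 \<in> hom C T (Dom C f)" "u2 \<in> hom C T (Dom C f)" using u1 u2 Df by simp_all
    ultimately show "u1 = u2" using kernel_mono[OF pa kf] by metis
  qed
  have gf_ex: "\<And>T t. T \<in> Ob C \<Longrightarrow> t \<in> hom C T Z \<Longrightarrow> Cmp C b' t = Zero C T P \<Longrightarrow>
      \<exists>u. u \<in> hom C T X \<and> Cmp C (Cmp C g f) u = t"
  proof -
    fix T t assume T: "T \<in> Ob C" and th: "t \<in> hom C T Z" and bt: "Cmp C b' t = Zero C T P"
    have "Cmp C q t = Cmp C q' (Cmp C b' t)" using q'b cmp_assoc[OF cat th bh q'h] by simp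
    also have "\<dots> = Zero C T W" using bt cmp_zero_r[OF pa T q'h] by simp
    finally have qt: "Cmp C q t = Zero C T (Cod C q)" using W_def by simp
    have th': "t \<in> hom C T (Dom C q)" using th kgb Z_def by simp
    obtain s where sh0: "s \<in> hom C T (Dom C g)" and gs: "Cmp C g s = t"
      using kernel_univ[OF kg T th' qt] by (elim exE conjE)
    have sh: "s \<in> hom C T Y" using sh0 Dg by simp
    have "Cmp C a' (Cmp C p s) = Cmp C (Cmp C a' p) s" using cmp_assoc[OF cat sh ph ah] .
    also have "\<dots> = Cmp C b' t" using sq gs cmp_assoc[OF cat sh gh bh] by simp
    also have "\<dots> = Cmp C a' (Zero C T A0)" using bt cmp_zero_r[OF pa T ah] by simp
    finally have e2: "Cmp C a' (Cmp C p s) = Cmp C a' (Zero C T A0)" .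
    have h1: "Cmp C p s \<in> hom C T (Dom C a')" using cmp_hom[OF cat sh ph] Da by simp
    have h2: "Zero C T A0 \<in> hom C T (Dom C a')" using zero_hom[OF pa T Ao] Da by simp
    have ps: "Cmp C p s = Zero C T (Cod C p)"
      using kernel_mono[OF pa ka h1 h2 e2] A0_def by simp
    have sh': "s \<in> hom C T (Dom C p)" using sh kfb Y_def by simp
    obtain u where uh0: "u \<in> hom C T (Dom C f)" and fu: "Cmp C f u = s"
      using kernel_univ[OF kf T sh' ps] by (elim exE conjE)
    have uh: "u \<in> hom C T X" using uh0 Df by simp
    have "Cmp C (Cmp C g f) u = t" using cmp_assoc[OF cat uh fh gh] fu gs by simp
    thus "\<exists>u. u \<in> hom C T X \<and> Cmp C (Cmp C g f) u = t" using uh by blast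
  qed
  obtain i where ib: "(i, b') \<in> E" using db unfolding deflation_def by (elim exE)
  have ki: "is_kernel C i b'" using kcp[OF ib] .
  note kib = kernel_basic[OF ki]
  define D where "D = Dom C i"
  have Db: "Dom C b' = Z" and Cb: "Cod C b' = P" using bh homD by metis+
  have ih: "i \<in> hom C D Z" using kib Db D_def by simp
  have Do: "D \<in> Ob C" using hom_ob[OF cat ih] by auto
  have bi: "Cmp C b' i = Zero C D P" using kib Cb D_def by simp
  obtain x where xh: "x \<in> hom C D X" and gfx: "Cmp C (Cmp C g f) x = i"
    using gf_ex[OF Do ih bi] by (elim exE conjE)
  have gfh': "Cmp C g f \<in> hom C X (Dom C b')" using gfh Db by simp
  have bgf': "Cmp C b' (Cmp C g f) = Zero C X (Cod C b')" using bgf Cb by simp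
  obtain v where vh0: "v \<in> hom C X (Dom C i)" and iv: "Cmp C i v = Cmp C g f"
    using kernel_univ[OF ki Xo gfh' bgf'] by (elim exE conjE)
  have vh: "v \<in> hom C X D" using vh0 D_def by simp
  have xv: "Cmp C x v = Id C X"
  proof (rule gf_mono)
    show "Cmp C x v \<in> hom C X X" using cmp_hom[OF cat vh xh] .
    show "Id C X \<in> hom C X X" using id_hom[OF cat Xo] .
    show "Cmp C (Cmp C g f) (Cmp C x v) = Cmp C (Cmp C g f) (Id C X)"
      using cmp_assoc[OF cat vh xh gfh] gfx iv id_r[OF cat gfh] by simp
  qed
  have vx: "Cmp C v x = Id C D"
  proof (rule kernel_mono[OF pa ki])
    show "Cmp C v x \<in> hom C D (Dom C i)" using cmp_hom[OF cat xh vh] D_def by simp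
    show "Id C D \<in> hom C D (Dom C i)" using id_hom[OF cat Do] D_def by simp
    show "Cmp C i (Cmp C v x) = Cmp C i (Id C D)"
      using cmp_assoc[OF cat xh vh ih] gfx iv id_r[OF cat ih] by simp
  qed
  have Dx: "Dom C x = D" and Cx: "Cod C x = X" and xA: "x \<in> Ar C" using xh homD by metis+
  have isox: "iso C x" unfolding iso_def using xA vh xv vx Dx Cx by blast
  have isoid: "\<And>Ob0. Ob0 \<in> Ob C \<Longrightarrow> iso C (Id C Ob0)"
  proof -
    fix Ob0 assume Ob0: "Ob0 \<in> Ob C"
    have h: "Id C Ob0 \<in> hom C Ob0 Ob0" using id_hom[OF cat Ob0] .
    have "Cmp C (Id C Ob0) (Id C Ob0) = Id C Ob0" using id_l[OF cat h] .
    thus "iso C (Id C Ob0)" unfolding iso_def using h homD by metis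
  qed
  have Ci: "Cod C i = Z" using ih homD by metis
  have E3: "\<forall>(i, p) \<in> E. \<forall>i' p' x y z.
        i' \<in> Ar C \<and> p' \<in> Ar C \<and> Cod C i' = Dom C p' \<and> iso C x \<and> iso C y \<and> iso C z \<and>
        x \<in> hom C (Dom C i) (Dom C i') \<and> y \<in> hom C (Cod C i) (Cod C i') \<and>
        z \<in> hom C (Cod C p) (Cod C p') \<and>
        Cmp C i' x = Cmp C y i \<and> Cmp C p' y = Cmp C z p \<longrightarrow> (i', p') \<in> E"
    by (rule cc[unfolded conflation_category_def, THEN conjunct2, THEN conjunct2])
  have H: "\<forall>i' p' x y z.
        i' \<in> Ar C \<and> p' \<in> Ar C \<and> Cod C i' = Dom C p' \<and> iso C x \<and> iso C y \<and> iso C z \<and>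
        x \<in> hom C (Dom C i) (Dom C i') \<and> y \<in> hom C (Cod C i) (Cod C i') \<and>
        z \<in> hom C (Cod C b') (Cod C p') \<and>
        Cmp C i' x = Cmp C y i \<and> Cmp C p' y = Cmp C z b' \<longrightarrow> (i', p') \<in> E"
    using bspec[OF E3 ib] by (simp only: prod.case)
  have gfA: "Cmp C g f \<in> Ar C" and Dgf: "Dom C (Cmp C g f) = X" and Cgf: "Cod C (Cmp C g f) = Z"
    using gfh homD by metis+
  have bA: "b' \<in> Ar C" using bh homD by metis
  have c1: "Cmp C (Cmp C g f) x = Cmp C (Id C Z) i" using gfx id_l[OF cat ih] by simp
  have c2: "Cmp C b' (Id C Z) = Cmp C (Id C P) b'" using id_l[OF cat bh] id_r[OF cat bh] by simp
  have c3: "x \<in> hom C (Dom C i) (Dom C (Cmp C g f))" using xh D_def Dgf by simp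
  have c4: "Id C Z \<in> hom C (Cod C i) (Cod C (Cmp C g f))" using id_hom[OF cat Zo] Ci Cgf by simp
  have c5: "Id C P \<in> hom C (Cod C b') (Cod C b')" using id_hom[OF cat Po] Cb by simp
  have c6: "Cod C (Cmp C g f) = Dom C b'" using Cgf Db by simp
  have "(Cmp C g f, b') \<in> E"
    using H[rule_format, of "Cmp C g f" b' x "Id C Z" "Id C P"] gfA bA c6 isox isoid[OF Zo]
      isoid[OF Po] c3 c4 c5 c1 c2 by blast
  thus ?thesis unfolding inflation_def by (rule exI)
qed

end
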